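(* If there exists a Heffter space with $v$ points and $r$ parallel classes (over some abelian group of order $2v+1$) which is a linear space, then every prime divisor of $2v+1$ divides $r-1$.
   Context: A half-set of an abelian group $G$ of odd order $2v+1\ge7$ is a subset $V\subseteq G\setminus\{0\}$ containing exactly one element of each pair $\{g,-g\}$, $g\ne0$. A Heffter system on $V$ with block size $k$ is a partition of $V$ into blocks of size $k$, each summing to $0$ in $G$. A Heffter space over $G$ is a partial linear space (any two distinct points in at most one block) with point set a half-set $V$ of $G$, together with a resolution (partition of its blocks into parallel classes, each partitioning $V$) in which every parallel class is a Heffter system on $V$. It is a linear space if any two distinct points lie in exactly one block. *)

theory Defs
  imports Main "HOL-Library.Disjoint_Sets" "HOL-Computational_Algebra.Primes"
begin

text \<open>The abelian group G is the universe of a finite type of class ab_group_add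
  (written additively, neutral element 0).\<close>

definition half_set :: "'a::ab_group_add set \<Rightarrow> bool" where
  "half_set V \<longleftrightarrow> V \<subseteq> UNIV - {0} \<and> (\<forall>g. g \<noteq> 0 \<longrightarrow> (g \<in> V \<longleftrightarrow> - g \<notin> V))"

definition heffter_system :: "'a::ab_group_add set \<Rightarrow> nat \<Rightarrow> 'a set set \<Rightarrow> bool" where
  "heffter_system V k C \<longleftrightarrow> partition_on V C \<and>
     (\<forall>B\<in>C. finite B \<and> card B = k \<and> \<Sum>B = 0)"

text \<open>A Heffter space with point set V, block size k and resolution into the r parallel
  classes P 0, ..., P (r-1) (pairwise disjoint as sets of blocks); the blocks are the
  union of the parallel classes.\<close>
definition blocks :: "(nat \<Rightarrow> 'a set set) \<Rightarrow> nat \<Rightarrow> 'a set set" where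
  "blocks P r = (\<Union>i<r. P i)"

definition heffter_space :: "'a::ab_group_add set \<Rightarrow> nat \<Rightarrow> (nat \<Rightarrow> 'a set set) \<Rightarrow> nat \<Rightarrow> bool" where
  "heffter_space V k P r \<longleftrightarrow> half_set V \<and>
     (\<forall>i<r. heffter_system V k (P i)) \<and>
     (\<forall>i<r. \<forall>j<r. i \<noteq> j \<longrightarrow> P i \<inter> P j = {}) \<and>
     (\<forall>x\<in>V. \<forall>y\<in>V. x \<noteq> y \<longrightarrow>
        (\<forall>B\<in>blocks P r. \<forall>B'\<in>blocks P r. x \<in> B \<and> y \<in> B \<and> x \<in> B' \<and> y \<in> B' \<longrightarrow> B = B'))"

definition is_linear_space :: "'a set \<Rightarrow> 'a set set \<Rightarrow> bool" where
  "is_linear_space V \<B> \<longleftrightarrow> (\<forall>x\<in>V. \<forall>y\<in>V. x \<noteq> y \<longrightarrow> (\<exists>!B. B \<in> \<B> \<and> x \<in> B \<and> y \<in> B))"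

end

theory Submission
  imports Defs "HOL-Algebra.Sylow" "HOL-Algebra.Multiplicative_Group"
begin

definition addG :: "('a::ab_group_add) monoid" where
  "addG = \<lparr>carrier = UNIV, mult = (+), one = 0\<rparr>"

lemma addG_group: "group (addG :: ('a::ab_group_add) monoid)"
  unfolding addG_def
  by (rule groupI) (auto simp: add.assoc intro: exI[of _ "- _"])

lemma addG_pow: "x [^]\<^bsub>(addG :: ('a::ab_group_add) monoid)\<^esub> (n::nat) = (\<Sum>i<n. x)"
  by (induction n) (auto simp: addG_def)

lemma cauchy_like:
  fixes m :: nat
  assumes all: "\<And>x::'a::{ab_group_add,finite}. (\<Sum>i<m. x) = 0"
    and p: "prime p" and pd: "p dvd card (UNIV :: 'a set)"
  shows "p dvd m"
proof (rule ccontr)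
  assume np: "\<not> p dvd m"
  interpret G: group "addG :: 'a monoid" by (rule addG_group)
  have ord: "order (addG :: 'a monoid) = p ^ 1 * (card (UNIV :: 'a set) div p)"
    using pd by (simp add: order_def addG_def)
  obtain H where H: "subgroup H (addG :: 'a monoid)" "card H = p ^ 1"
    using sylow_thm[OF p addG_group ord] by (auto simp: addG_def)
  have triv: "x = 0" if xH: "x \<in> H" for x :: 'a
  proof -
    interpret K: group "(addG :: 'a monoid)\<lparr>carrier := H\<rparr>"
      by (rule G.subgroup_imp_group[OF H(1)])
    have "x [^]\<^bsub>(addG :: 'a monoid)\<lparr>carrier := H\<rparr>\<^esub> order ((addG :: 'a monoid)\<lparr>carrier := H\<rparr>) = \<one>\<^bsub>(addG :: 'a monoid)\<lparr>carrier := H\<rparr>\<^esub>"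
      using K.pow_order_eq_1 xH by simp
    hence "x [^]\<^bsub>(addG :: 'a monoid)\<^esub> p = \<one>\<^bsub>(addG :: 'a monoid)\<^esub>"
      using H(2) by (simp add: order_def G.nat_pow_consistent[symmetric])
    have xc: "x \<in> carrier (addG :: 'a monoid)" by (simp add: addG_def)
    hence d1: "G.ord x dvd p" using \<open>x [^]\<^bsub>(addG :: 'a monoid)\<^esub> p = \<one>\<^bsub>(addG :: 'a monoid)\<^esub>\<close> G.pow_eq_id by blast
    have "x [^]\<^bsub>(addG :: 'a monoid)\<^esub> m = \<one>\<^bsub>(addG :: 'a monoid)\<^esub>"
      using all by (simp add: addG_pow) (simp add: addG_def)
    hence d2: "G.ord x dvd m" using xc G.pow_eq_id by blast
    have "G.ord x = 1"
      using d1 d2 np p by (metis prime_nat_iff)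
    thus "x = 0" using G.ord_eq_1[OF xc] by (simp add: addG_def)
  qed
  hence "H \<subseteq> {0}" by auto
  hence "card H \<le> card {0::'a}" by (intro card_mono) auto
  with H(2) p show False using prime_gt_1_nat[of p] by simp
qed


lemma partition_sum:
  fixes f :: "'a \<Rightarrow> 'b::comm_monoid_add"
  assumes "partition_on V C" "finite V"
  shows "sum f V = (\<Sum>B\<in>C. sum f B)"
proof -
  have "C \<subseteq> Pow V" using assms(1) unfolding partition_on_def by blast
  moreover have "finite (Pow V)" using assms(2) by simp
  ultimately have fin: "finite C" by (rule finite_subset)
  have fa: "\<forall>A\<in>C. finite A" using assms unfolding partition_on_def by (metis Union_upper finite_subset)
  have "sum f (\<Union>C) = (\<Sum>B\<in>C. sum f B)"
    by (rule sum.Union_disjoint[simplified]) (use assms fa in \<open>auto simp: partition_on_def disjoint_def\<close>)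
  thus ?thesis using assms(1) by (simp add: partition_on_def)
qed

lemma partition_unique:
  assumes "partition_on V C" "B \<in> C" "B' \<in> C" "x \<in> B" "x \<in> B'"
  shows "B = B'"
  using assms unfolding partition_on_def disjoint_def by blast

lemma key_mult:
  fixes V :: "'a::{ab_group_add, finite} set"
  assumes hs: "heffter_space V k P r"
    and lin: "is_linear_space V (blocks P r)"
    and x: "x \<in> V" and r: "r \<ge> 1"
  shows "(\<Sum>i<r. x) = x"
proof -
  note H = hs[unfolded heffter_space_def]
  have hsys: "\<And>i. i < r \<Longrightarrow> heffter_system V k (P i)"
    using H[THEN conjunct2, THEN conjunct1] by simp
  have disj: "\<And>i j. i < r \<Longrightarrow> j < r \<Longrightarrow> i \<noteq> j \<Longrightarrow> P i \<inter> P j = {}"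
    using H[THEN conjunct2, THEN conjunct2, THEN conjunct1] by simp
  have H4: "\<forall>x\<in>V. \<forall>y\<in>V. x \<noteq> y \<longrightarrow>
        (\<forall>B\<in>blocks P r. \<forall>B'\<in>blocks P r. x \<in> B \<and> y \<in> B \<and> x \<in> B' \<and> y \<in> B' \<longrightarrow> B = B')"
    using H[THEN conjunct2, THEN conjunct2, THEN conjunct2] .
  have pl: "B = B'" if "y \<in> V" "x \<noteq> y" "B \<in> blocks P r" "B' \<in> blocks P r"
              "x \<in> B" "y \<in> B" "x \<in> B'" "y \<in> B'" for y B B'
    using H4 x that by blast
  have part: "\<And>i. i < r \<Longrightarrow> partition_on V (P i)"
    and zs: "\<And>i B. i < r \<Longrightarrow> B \<in> P i \<Longrightarrow> sum id B = 0"
    using hsys unfolding heffter_system_def by auto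
  have sV: "sum id V = 0"
    using partition_sum[OF part[OF r[THEN less_le_trans[OF zero_less_one]]], of id] zs[of 0] r
    by simp
  define Bx where "Bx i = (SOME B. B \<in> P i \<and> x \<in> B)" for i
  have Bx: "Bx i \<in> P i \<and> x \<in> Bx i" if "i < r" for i
  proof -
    have "\<exists>B. B \<in> P i \<and> x \<in> B" using part[OF that] x unfolding partition_on_def by blast
    thus ?thesis unfolding Bx_def by (rule someI_ex)
  qed
  have cover: "V - {x} = (\<Union>i\<in>{..<r}. Bx i - {x})"
  proof
    show "V - {x} \<subseteq> (\<Union>i\<in>{..<r}. Bx i - {x})"
    proof
      fix y assume y: "y \<in> V - {x}"
      then obtain B where B: "B \<in> blocks P r" "x \<in> B" "y \<in> B"
        using lin x unfolding is_linear_space_def by blast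
      then obtain i where i: "i < r" "B \<in> P i" unfolding blocks_def by blast
      have "B = Bx i" using partition_unique[OF part[OF i(1)] i(2)] Bx[OF i(1)] B(2) by blast
      thus "y \<in> (\<Union>i\<in>{..<r}. Bx i - {x})" using i y B by auto
    qed
  next
    show "(\<Union>i\<in>{..<r}. Bx i - {x}) \<subseteq> V - {x}"
      using Bx part unfolding partition_on_def by blast
  qed
  have dj: "(Bx i - {x}) \<inter> (Bx j - {x}) = {}" if "i < r" "j < r" "i \<noteq> j" for i j
  proof (rule ccontr)
    assume "(Bx i - {x}) \<inter> (Bx j - {x}) \<noteq> {}"
    then obtain y where y: "y \<in> Bx i" "y \<in> Bx j" "y \<noteq> x" by blast
    have yV: "y \<in> V" using y Bx[OF that(1)] part[OF that(1)] unfolding partition_on_def by blast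
    have bi: "Bx i \<in> blocks P r" "Bx j \<in> blocks P r" using Bx that unfolding blocks_def by blast+
    have "Bx i = Bx j" using pl[OF yV y(3)[symmetric] bi] Bx[OF that(1)] Bx[OF that(2)] y(1,2) by simp
    moreover have "Bx i \<in> P i" "Bx j \<in> P j" using Bx that by blast+
    ultimately have "Bx i \<in> P i \<inter> P j" by simp
    thus False using disj[OF that] by simp
  qed
  have "sum id (V - {x}) = (\<Sum>i<r. sum id (Bx i - {x}))"
    unfolding cover by (rule sum.UNION_disjoint) (use dj in auto)
  also have "\<dots> = (\<Sum>i<r. - x)"
  proof (rule sum.cong)
    fix i assume "i \<in> {..<r}"
    hence i: "i < r" by simp
    have "finite (Bx i)" by simp
    thus "sum id (Bx i - {x}) = - x" using Bx[OF i] zs[OF i] by (simp add: sum_diff1)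
  qed simp
  finally have "- x = - (\<Sum>i<r. x)" using sV x by (simp add: sum_diff1 sum_negf)
  thus ?thesis by simp
qed

theorem corollary2p3:
  fixes V :: "'a::{ab_group_add, finite} set"
    and P :: "nat \<Rightarrow> 'a set set"
    and v k r :: nat
  assumes "card (UNIV :: 'a set) = 2 * v + 1"
    and "2 * v + 1 \<ge> 7"
    and "heffter_space V k P r"
    and "card V = v"
    and "is_linear_space V (blocks P r)"
  shows "\<forall>p::nat. prime p \<and> p dvd 2 * v + 1 \<longrightarrow> int p dvd int r - 1"
proof (intro allI impI)
  fix p :: nat assume pp: "prime p \<and> p dvd 2 * v + 1"
  have hv: "half_set V" using assms(3)[unfolded heffter_space_def, THEN conjunct1] .
  have "V \<noteq> {}" using assms(2,4) by auto
  then obtain x0 where x0: "x0 \<in> V" by blast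
  have r: "r \<ge> 1"
  proof (rule ccontr)
    assume "\<not> r \<ge> 1"
    hence "r = 0" by simp
    hence "blocks P r = {}" by (simp add: blocks_def)
    have "card (V - {x0}) \<ge> 1" using assms(2,4) x0 by simp
    hence "V - {x0} \<noteq> {}" by (metis card.empty not_one_le_zero)
    then obtain y where "y \<in> V" "y \<noteq> x0" by blast
    thus False using assms(5) x0 \<open>blocks P r = {}\<close> unfolding is_linear_space_def by blast
  qed
  have all: "(\<Sum>i<r - 1. x) = 0" for x :: 'a
  proof -
    have gen: "(\<Sum>i<r - 1. y) = 0" if y: "y \<in> V" for y
    proof -
      have ky: "(\<Sum>i<r. y) = y" by (rule key_mult[OF assms(3) assms(5) y r])
      obtain s where s: "r = Suc s" using r by (cases r) auto
      show ?thesis using ky unfolding s by simp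
    qed
    show ?thesis
    proof (cases "x = 0")
      case True thus ?thesis by simp
    next
      case False
      show ?thesis
      proof (cases "x \<in> V")
        case True thus ?thesis by (rule gen)
      next
        case nV: False
        have "x \<in> V \<longleftrightarrow> - x \<notin> V"
          using hv[unfolded half_set_def, THEN conjunct2, rule_format, OF False] .
        hence "- x \<in> V" using nV by simp
        hence "(\<Sum>i<r - 1. - x) = 0" by (rule gen)
        thus ?thesis by (simp add: sum_negf)
      qed
    qed
  qed
  have "p dvd r - 1" by (rule cauchy_like[OF all]) (use pp assms(1) in auto)
  hence "int p dvd int (r - 1)" by simp
  thus "int p dvd int r - 1" using r by (simp add: of_nat_diff)
qed

end
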